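(* Let $\mathcal E$ be a quantum channel from $\mathcal L(\mathcal H_0)$ to $\mathcal L(\mathcal H_1)$ with Choi–Jamiołkowski operator $E=\sum_m|K_m\rangle\!\rangle\langle\!\langle K_m|\in\mathcal L(\mathcal H_1\otimes\mathcal H_0)$, where the $|K_m\rangle\!\rangle$ are linearly independent (e.g. eigenvectors of $E$ scaled by square roots of the nonzero eigenvalues). The following two conditions are equivalent: (i) $\sum_{m,n}\alpha_{mn}K_m^\dagger K_n=0$ with $\alpha_{mn}\in\mathbb C$ implies $\alpha_{mn}=0$ for all $m,n$; (ii) $\sum_{m,n}\alpha_{mn}|K_m\rangle\!\rangle\langle\!\langle K_n|+\sum_a\beta_a\,\sigma_a\otimes I_0+\sum_{a,b}\gamma_{ab}\,\sigma_a\otimes\tau_b=0$ with complex coefficients implies $\alpha_{mn}=0$, $\beta_a=0$, $\gamma_{ab}=0$ for all indices.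
   Context: Finite-dimensional Hilbert spaces, $d_k=\dim\mathcal H_k$. For $A:\mathcal H_0\to\mathcal H_1$, $|A\rangle\!\rangle=(A\otimes I_0)|I\rangle\!\rangle\in\mathcal H_1\otimes\mathcal H_0$ with $|I\rangle\!\rangle=\sum_i|i\rangle\otimes|i\rangle\in\mathcal H_0\otimes\mathcal H_0$ for a fixed orthonormal basis; the Choi–Jamiołkowski operator of $\mathcal E$ is $(\mathcal E\otimes\mathrm{id})(|I\rangle\!\rangle\langle\!\langle I|)$, and the $K_m$ are then Kraus operators of $\mathcal E$. $\{\sigma_a\}_{a=2}^{d_1^2}$ and $\{\tau_b\}_{b=2}^{d_0^2}$ are bases of traceless hermitian operators on $\mathcal H_1$ and $\mathcal H_0$ respectively. *)

theory Defs
  imports "HOL-Analysis.Analysis"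
begin

text \<open>Finite-dimensional Hilbert spaces are modelled by finite index types:
  H_0 = complex^'a, H_1 = complex^'b. An operator A : H_0 -> H_1 is a matrix
  complex^'a^'b (rows indexed by 'b). H_1 (x) H_0 = complex^('b \<times> 'a).\<close>

definition qadj :: "complex^'n^'m \<Rightarrow> complex^'m^'n" where
  "qadj M = (\<chi> j i. cnj (M $ i $ j))"

definition cscale :: "complex \<Rightarrow> complex^'n^'m \<Rightarrow> complex^'n^'m" where
  "cscale c M = (\<chi> i j. c * M $ i $ j)"

text \<open>Double-ket |A>> = (A (x) I_0)|I>>, |I>> = sum_i |i> (x) |i>; its (k,i) component is A_{k i}.\<close>
definition dket :: "complex^'a^'b \<Rightarrow> complex^('b \<times> 'a)" where
  "dket A = (\<chi> p. A $ fst p $ snd p)"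

definition ketbra :: "complex^'n \<Rightarrow> complex^'n \<Rightarrow> complex^'n^'n" where
  "ketbra u v = (\<chi> p q. u $ p * cnj (v $ q))"

definition qtensor :: "complex^'m^'m \<Rightarrow> complex^'n^'n \<Rightarrow> complex^('m \<times> 'n)^('m \<times> 'n)" where
  "qtensor A B = (\<chi> p q. A $ fst p $ fst q * B $ snd p $ snd q)"

definition qtrace :: "complex^'n^'n \<Rightarrow> complex" where
  "qtrace M = (\<Sum>i\<in>UNIV. M $ i $ i)"

definition qhermitian :: "complex^'n^'n \<Rightarrow> bool" where
  "qhermitian M \<longleftrightarrow> qadj M = M"

definition traceless_herm_basis :: "(nat \<Rightarrow> complex^'n^'n) \<Rightarrow> bool" where
  "traceless_herm_basis \<sigma> \<longleftrightarrow>
     (\<forall>a\<in>{2..CARD('n)^2}. qhermitian (\<sigma> a) \<and> qtrace (\<sigma> a) = 0) \<and>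
     (\<forall>c::nat \<Rightarrow> real. (\<Sum>a=2..CARD('n)^2. cscale (complex_of_real (c a)) (\<sigma> a)) = 0
         \<longrightarrow> (\<forall>a\<in>{2..CARD('n)^2}. c a = 0)) \<and>
     (\<forall>M. qhermitian M \<and> qtrace M = 0 \<longrightarrow>
         (\<exists>c::nat \<Rightarrow> real. M = (\<Sum>a=2..CARD('n)^2. cscale (complex_of_real (c a)) (\<sigma> a))))"

end

theory Submission
  imports Defs
begin

lemma cscale_nth[simp]: "cscale c M $ i $ j = c * M $ i $ j"
  by (simp add: cscale_def)
lemma qadj_nth[simp]: "qadj M $ i $ j = cnj (M $ j $ i)"
  by (simp add: qadj_def)
lemma herm_entry: "qhermitian M \<Longrightarrow> cnj (M$i$j) = M$j$i"
  by (metis qadj_nth qhermitian_def)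

lemma re_im_mult: "complex_of_real (Re z) * s + \<i> * (complex_of_real (Im z) * s) = z * s"
proof -
  have e: "complex_of_real (Re z) + \<i> * complex_of_real (Im z) = z" by (simp add: complex_eq_iff)
  have "complex_of_real (Re z) * s + \<i> * (complex_of_real (Im z) * s)
      = (complex_of_real (Re z) + \<i> * complex_of_real (Im z)) * s" by (simp add: algebra_simps)
  then show ?thesis by (simp only: e)
qed

lemma basis_indep_complex:
  fixes \<sigma> :: "nat \<Rightarrow> complex^'n^'n"
  assumes B: "traceless_herm_basis \<sigma>"
    and Z: "\<And>p q. (\<Sum>a=2..CARD('n)^2. c a * \<sigma> a $ p $ q) = 0"
  shows "\<forall>a\<in>{2..CARD('n)^2}. c a = 0"
proof -
  define S where "S = {2..CARD('n)^2}"
  define A where "A p q = (\<Sum>a\<in>S. complex_of_real (Re (c a)) * \<sigma> a $p$q)" for p q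
  define Bm where "Bm p q = (\<Sum>a\<in>S. complex_of_real (Im (c a)) * \<sigma> a $p$q)" for p q
  have herm: "\<And>a. a \<in> S \<Longrightarrow> qhermitian (\<sigma> a)" using B unfolding traceless_herm_basis_def S_def by blast
  have AB: "A p q + \<i> * Bm p q = 0" for p q
  proof -
    have "A p q + \<i> * Bm p q = (\<Sum>a\<in>S. c a * \<sigma> a $ p $ q)"
      unfolding A_def Bm_def sum_distrib_left sum.distrib[symmetric]
      by (rule sum.cong) (simp_all add: re_im_mult)
    then show ?thesis using Z S_def by simp
  qed
  have hA: "cnj (A p q) = A q p" for p q
    unfolding A_def cnj_sum by (rule sum.cong) (auto simp: herm_entry herm)
  have hB: "cnj (Bm p q) = Bm q p" for p q
    unfolding Bm_def cnj_sum by (rule sum.cong) (auto simp: herm_entry herm)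
  have B0: "Bm p q = 0" for p q
  proof -
    have 1: "A p q = - \<i> * Bm p q" using AB[of p q] by (simp add: algebra_simps eq_neg_iff_add_eq_0)
    have "A q p = - \<i> * Bm q p" using AB[of q p] by (simp add: algebra_simps eq_neg_iff_add_eq_0)
    then have "cnj (A q p) = \<i> * cnj (Bm q p)" by simp
    then have "A p q = \<i> * Bm p q" using hA hB by simp
    with 1 show ?thesis by simp
  qed
  have A0: "A p q = 0" for p q using AB[of p q] B0[of p q] by simp
  have ind: "\<forall>c::nat \<Rightarrow> real. (\<Sum>a=2..CARD('n)^2. cscale (complex_of_real (c a)) (\<sigma> a)) = 0
         \<longrightarrow> (\<forall>a\<in>{2..CARD('n)^2}. c a = 0)" using B unfolding traceless_herm_basis_def by blast
  have "(\<Sum>a=2..CARD('n)^2. cscale (complex_of_real (Re (c a))) (\<sigma> a)) = 0"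
    using A0 by (simp add: vec_eq_iff A_def S_def)
  then have r: "\<forall>a\<in>S. Re (c a) = 0" using ind[rule_format, of "\<lambda>a. Re (c a)"] unfolding S_def by blast
  have "(\<Sum>a=2..CARD('n)^2. cscale (complex_of_real (Im (c a))) (\<sigma> a)) = 0"
    using B0 by (simp add: vec_eq_iff Bm_def S_def)
  then have i: "\<forall>a\<in>S. Im (c a) = 0" using ind[rule_format, of "\<lambda>a. Im (c a)"] unfolding S_def by blast
  show ?thesis using r i unfolding S_def by (simp add: complex_eq_iff)
qed

lemma basis_span_complex:
  fixes \<sigma> :: "nat \<Rightarrow> complex^'n^'n" and Z :: "complex^'n^'n"
  assumes B: "traceless_herm_basis \<sigma>" and tr: "qtrace Z = 0"
  shows "\<exists>c. \<forall>p q. Z $ p $ q = (\<Sum>a=2..CARD('n)^2. c a * \<sigma> a $ p $ q)"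
proof -
  define H :: "complex^'n^'n" where "H = (\<chi> p q. (Z$p$q + cnj(Z$q$p))/2)"
  define H' :: "complex^'n^'n" where "H' = (\<chi> p q. (Z$p$q - cnj(Z$q$p))/(2*\<i>))"
  have sp: "\<forall>M. qhermitian M \<and> qtrace M = 0 \<longrightarrow>
         (\<exists>c::nat \<Rightarrow> real. M = (\<Sum>a=2..CARD('n)^2. cscale (complex_of_real (c a)) (\<sigma> a)))"
    using B unfolding traceless_herm_basis_def by blast
  have trc: "(\<Sum>i\<in>UNIV. cnj (Z$i$i)) = 0" using tr unfolding qtrace_def cnj_sum[symmetric] by simp
  have "qhermitian H" unfolding qhermitian_def H_def by (simp add: vec_eq_iff add.commute)
  moreover have "qtrace H = 0" using tr trc unfolding qtrace_def H_def
    by (simp add: sum_divide_distrib[symmetric] sum.distrib)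
  ultimately obtain c where c: "H = (\<Sum>a=2..CARD('n)^2. cscale (complex_of_real (c a)) (\<sigma> a))"
    using sp by blast
  have "qhermitian H'" unfolding qhermitian_def H'_def by (simp add: vec_eq_iff field_simps)
  moreover have "qtrace H' = 0"
  proof -
    have "(\<Sum>i\<in>UNIV. - (\<i> * (Z $ i $ i - cnj (Z $ i $ i)) / 2)) = - (\<i> * ((\<Sum>i\<in>UNIV. Z $ i $ i) - (\<Sum>i\<in>UNIV. cnj (Z $ i $ i))) / 2)"
      by (simp add: sum_negf sum_divide_distrib[symmetric] sum_distrib_left[symmetric] sum_subtractf)
    then show ?thesis using tr trc unfolding qtrace_def H'_def by simp
  qed
  ultimately obtain c' where c': "H' = (\<Sum>a=2..CARD('n)^2. cscale (complex_of_real (c' a)) (\<sigma> a))"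
    using sp by blast
  have "Z $ p $ q = (\<Sum>a=2..CARD('n)^2. (complex_of_real (c a) + \<i> * complex_of_real (c' a)) * \<sigma> a $ p $ q)" for p q
  proof -
    have "Z $ p $ q = H $ p $ q + \<i> * H' $ p $ q" unfolding H_def H'_def by (simp add: field_simps)
    also have "\<dots> = (\<Sum>a=2..CARD('n)^2. (complex_of_real (c a) + \<i> * complex_of_real (c' a)) * \<sigma> a $ p $ q)"
      unfolding c c' by (simp add: sum_distrib_left sum.distrib[symmetric] algebra_simps)
    finally show ?thesis .
  qed
  then show ?thesis by (intro exI[of _ "\<lambda>a. complex_of_real (c a) + \<i> * complex_of_real (c' a)"]) blast
qed

lemma basis_span_all:
  fixes \<tau> :: "nat \<Rightarrow> complex^'n^'n" and E :: "complex^'n^'n"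
  assumes B: "traceless_herm_basis \<tau>"
  shows "\<exists>d e. \<forall>p q. E $ p $ q = d * (if p = q then 1 else 0) + (\<Sum>b=2..CARD('n)^2. e b * \<tau> b $ p $ q)"
proof -
  define d where "d = qtrace E / of_nat CARD('n)"
  define F :: "complex^'n^'n" where "F = (\<chi> p q. E$p$q - d * (if p = q then 1 else 0))"
  have "qtrace F = 0" unfolding qtrace_def F_def d_def
    by (simp add: sum_subtractf qtrace_def[symmetric])
  then obtain e where e: "\<forall>p q. F $ p $ q = (\<Sum>b=2..CARD('n)^2. e b * \<tau> b $ p $ q)"
    using basis_span_complex[OF B] by blast
  have "E $ p $ q = d * (if p = q then 1 else 0) + (\<Sum>b=2..CARD('n)^2. e b * \<tau> b $ p $ q)" for p q
    using e[rule_format, of p q, symmetric] unfolding F_def by simp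
  then show ?thesis by blast
qed

lemma big_entry:
  fixes K :: "nat \<Rightarrow> complex^'a^'b" and \<sigma> :: "nat \<Rightarrow> complex^'b^'b" and \<tau> :: "nat \<Rightarrow> complex^'a^'a"
  shows "((\<Sum>m<r. \<Sum>n<r. cscale (\<alpha> m n) (ketbra (dket (K m)) (dket (K n))))
            + (\<Sum>a=2..CARD('b)^2. cscale (\<beta> a) (qtensor (\<sigma> a) (mat 1)))
            + (\<Sum>a=2..CARD('b)^2. \<Sum>b=2..CARD('a)^2. cscale (\<gamma> a b) (qtensor (\<sigma> a) (\<tau> b)))) $ (k,i) $ (l,j)
   = (\<Sum>m<r. \<Sum>n<r. \<alpha> m n * (K m $ k $ i * cnj (K n $ l $ j)))
     + (\<Sum>a=2..CARD('b)^2. \<beta> a * (\<sigma> a $ k $ l * (if i = j then 1 else 0)))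
     + (\<Sum>a=2..CARD('b)^2. \<Sum>b=2..CARD('a)^2. \<gamma> a b * (\<sigma> a $ k $ l * \<tau> b $ i $ j))"
  by (simp add: ketbra_def dket_def qtensor_def mat_def)

lemma prod_entry:
  fixes K :: "nat \<Rightarrow> complex^'a^'b"
  shows "(\<Sum>m<r. \<Sum>n<r. cscale (\<alpha> m n) (qadj (K m) ** K n)) $ i $ j
     = (\<Sum>m<r. \<Sum>n<r. \<alpha> m n * (\<Sum>k\<in>UNIV. cnj (K m $ k $ i) * K n $ k $ j))"
  by (simp add: matrix_matrix_mult_def)

lemma swap_id:
  fixes K :: "nat \<Rightarrow> complex^'a^'b"
  shows "(\<Sum>m<r. \<Sum>n<r. \<alpha> n m * (\<Sum>k\<in>UNIV. cnj (K m $ k $ i) * K n $ k $ j))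
   = (\<Sum>k\<in>UNIV. \<Sum>m<r. \<Sum>n<r. \<alpha> m n * (K m $ k $ j * cnj (K n $ k $ i)))"
proof -
  have "(\<Sum>m<r. \<Sum>n<r. \<alpha> n m * (\<Sum>k\<in>UNIV. cnj (K m $ k $ i) * K n $ k $ j))
      = (\<Sum>m<r. \<Sum>n<r. \<Sum>k\<in>UNIV. \<alpha> n m * (K n $ k $ j * cnj (K m $ k $ i)))"
    by (simp add: sum_distrib_left mult.commute)
  also have "\<dots> = (\<Sum>n<r. \<Sum>m<r. \<Sum>k\<in>UNIV. \<alpha> n m * (K n $ k $ j * cnj (K m $ k $ i)))"
    by (rule sum.swap)
  also have "\<dots> = (\<Sum>n<r. \<Sum>k\<in>UNIV. \<Sum>m<r. \<alpha> n m * (K n $ k $ j * cnj (K m $ k $ i)))"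
    by (rule sum.cong[OF refl], rule sum.swap)
  also have "\<dots> = (\<Sum>k\<in>UNIV. \<Sum>n<r. \<Sum>m<r. \<alpha> n m * (K n $ k $ j * cnj (K m $ k $ i)))"
    by (rule sum.swap)
  finally show ?thesis .
qed

lemma trace_part:
  fixes \<sigma> :: "nat \<Rightarrow> complex^'b^'b" and \<tau> :: "nat \<Rightarrow> complex^'a^'a"
  assumes sb: "traceless_herm_basis \<sigma>"
  shows "(\<Sum>k\<in>UNIV. (\<Sum>a=2..CARD('b)^2. \<beta> a * (\<sigma> a $ k $ k * (if i = j then 1 else 0)))
     + (\<Sum>a=2..CARD('b)^2. \<Sum>b=2..CARD('a)^2. \<gamma> a b * (\<sigma> a $ k $ k * \<tau> b $ i $ j))) = 0"
proof -
  have tr: "(\<Sum>k\<in>UNIV. \<sigma> a $ k $ k) = 0" if "a \<in> {2..CARD('b)^2}" for a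
    using sb that unfolding traceless_herm_basis_def qtrace_def by blast
  have "(\<Sum>k\<in>UNIV. (\<Sum>a=2..CARD('b)^2. \<beta> a * (\<sigma> a $ k $ k * (if i = j then 1 else 0)))
     + (\<Sum>a=2..CARD('b)^2. \<Sum>b=2..CARD('a)^2. \<gamma> a b * (\<sigma> a $ k $ k * \<tau> b $ i $ j)))
    = (\<Sum>k\<in>UNIV. \<Sum>a=2..CARD('b)^2. (\<beta> a * (if i = j then 1 else 0) + (\<Sum>b=2..CARD('a)^2. \<gamma> a b * \<tau> b $ i $ j)) * \<sigma> a $ k $ k)"
    by (simp add: sum.distrib[symmetric] sum_distrib_right sum_distrib_left algebra_simps)
  also have "\<dots> = (\<Sum>a=2..CARD('b)^2. (\<beta> a * (if i = j then 1 else 0) + (\<Sum>b=2..CARD('a)^2. \<gamma> a b * \<tau> b $ i $ j)) * (\<Sum>k\<in>UNIV. \<sigma> a $ k $ k))"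
    by (subst sum.swap) (simp add: sum_distrib_left)
  also have "\<dots> = 0" using tr by simp
  finally show ?thesis .
qed

lemma mult_if_delta: "(c::complex) * (if P then 1 else 0) = (if P then c else 0)"
  by simp

theorem mainTheorem13:
  fixes K :: "nat \<Rightarrow> complex^'a^'b" and r :: nat
    and \<sigma> :: "nat \<Rightarrow> complex^'b^'b" and \<tau> :: "nat \<Rightarrow> complex^'a^'a"
  assumes trace_pres: "(\<Sum>m<r. qadj (K m) ** K m) = mat 1"
    and kraus_indep: "\<forall>c::nat \<Rightarrow> complex. (\<Sum>m<r. c m *s dket (K m)) = 0 \<longrightarrow> (\<forall>m<r. c m = 0)"
    and sigma_basis: "traceless_herm_basis \<sigma>"
    and tau_basis: "traceless_herm_basis \<tau>"
  shows "(\<forall>\<alpha>::nat \<Rightarrow> nat \<Rightarrow> complex.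
            (\<Sum>m<r. \<Sum>n<r. cscale (\<alpha> m n) (qadj (K m) ** K n)) = 0
            \<longrightarrow> (\<forall>m<r. \<forall>n<r. \<alpha> m n = 0))
     \<longleftrightarrow>
     (\<forall>(\<alpha>::nat \<Rightarrow> nat \<Rightarrow> complex) (\<beta>::nat \<Rightarrow> complex) (\<gamma>::nat \<Rightarrow> nat \<Rightarrow> complex).
            (\<Sum>m<r. \<Sum>n<r. cscale (\<alpha> m n) (ketbra (dket (K m)) (dket (K n))))
            + (\<Sum>a=2..CARD('b)^2. cscale (\<beta> a) (qtensor (\<sigma> a) (mat 1)))
            + (\<Sum>a=2..CARD('b)^2. \<Sum>b=2..CARD('a)^2. cscale (\<gamma> a b) (qtensor (\<sigma> a) (\<tau> b))) = 0
            \<longrightarrow> (\<forall>m<r. \<forall>n<r. \<alpha> m n = 0)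
              \<and> (\<forall>a\<in>{2..CARD('b)^2}. \<beta> a = 0)
              \<and> (\<forall>a\<in>{2..CARD('b)^2}. \<forall>b\<in>{2..CARD('a)^2}. \<gamma> a b = 0))"
  (is "?P1 \<longleftrightarrow> ?P2")
proof
  assume P1: ?P1
  show ?P2
  proof (intro allI impI)
    fix \<alpha> :: "nat \<Rightarrow> nat \<Rightarrow> complex" and \<beta> :: "nat \<Rightarrow> complex" and \<gamma> :: "nat \<Rightarrow> nat \<Rightarrow> complex"
    assume eq: "(\<Sum>m<r. \<Sum>n<r. cscale (\<alpha> m n) (ketbra (dket (K m)) (dket (K n))))
            + (\<Sum>a=2..CARD('b)^2. cscale (\<beta> a) (qtensor (\<sigma> a) (mat 1)))
            + (\<Sum>a=2..CARD('b)^2. \<Sum>b=2..CARD('a)^2. cscale (\<gamma> a b) (qtensor (\<sigma> a) (\<tau> b))) = 0"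
    have ent: "(\<Sum>m<r. \<Sum>n<r. \<alpha> m n * (K m $ k $ i * cnj (K n $ l $ j)))
     + (\<Sum>a=2..CARD('b)^2. \<beta> a * (\<sigma> a $ k $ l * (if i = j then 1 else 0)))
     + (\<Sum>a=2..CARD('b)^2. \<Sum>b=2..CARD('a)^2. \<gamma> a b * (\<sigma> a $ k $ l * \<tau> b $ i $ j)) = 0" for k i l j
      using arg_cong[OF eq, of "\<lambda>M. M $ (k,i) $ (l,j)"] unfolding big_entry by simp
    have trp: "(\<Sum>k\<in>UNIV. \<Sum>m<r. \<Sum>n<r. \<alpha> m n * (K m $ k $ i * cnj (K n $ k $ j))) = 0" for i j
    proof -
      have "(\<Sum>k\<in>UNIV. (\<Sum>m<r. \<Sum>n<r. \<alpha> m n * (K m $ k $ i * cnj (K n $ k $ j)))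
         + ((\<Sum>a=2..CARD('b)^2. \<beta> a * (\<sigma> a $ k $ k * (if i = j then 1 else 0)))
         + (\<Sum>a=2..CARD('b)^2. \<Sum>b=2..CARD('a)^2. \<gamma> a b * (\<sigma> a $ k $ k * \<tau> b $ i $ j)))) = 0"
        using ent[of _ i _ j] by (simp add: add.assoc)
      then show ?thesis using trace_part[OF sigma_basis, where \<beta>=\<beta> and i=i and j=j and \<gamma>=\<gamma> and \<tau>=\<tau>]
        by (simp add: sum.distrib)
    qed
    have "(\<Sum>m<r. \<Sum>n<r. cscale (\<alpha> n m) (qadj (K m) ** K n)) = 0"
      unfolding vec_eq_iff
    proof (intro allI)
      fix i j
      show "(\<Sum>m<r. \<Sum>n<r. cscale (\<alpha> n m) (qadj (K m) ** K n)) $ i $ j = 0 $ i $ j"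
        using prod_entry[where \<alpha>="\<lambda>m n. \<alpha> n m" and r=r and K=K and i=i and j=j] swap_id[where r=r and \<alpha>=\<alpha> and K=K and i=i and j=j] trp[of j i] by simp
    qed
    with P1 have a0: "\<forall>m<r. \<forall>n<r. \<alpha> m n = 0" by auto
    have Y0: "\<forall>a\<in>{2..CARD('b)^2}. \<beta> a * (if i = j then 1 else 0) + (\<Sum>b=2..CARD('a)^2. \<gamma> a b * \<tau> b $ i $ j) = 0" for i j
    proof (rule basis_indep_complex[OF sigma_basis])
      fix k l
      have "(\<Sum>m<r. \<Sum>n<r. \<alpha> m n * (K m $ k $ i * cnj (K n $ l $ j))) = 0" using a0 by simp
      then have "(\<Sum>a=2..CARD('b)^2. \<beta> a * (\<sigma> a $ k $ l * (if i = j then 1 else 0)))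
     + (\<Sum>a=2..CARD('b)^2. \<Sum>b=2..CARD('a)^2. \<gamma> a b * (\<sigma> a $ k $ l * \<tau> b $ i $ j)) = 0"
        using ent[of k i l j] by simp
      then show "(\<Sum>a=2..CARD('b)^2. (\<beta> a * (if i = j then 1 else 0) + (\<Sum>b=2..CARD('a)^2. \<gamma> a b * \<tau> b $ i $ j)) * \<sigma> a $ k $ l) = 0"
        by (simp add: sum.distrib sum_distrib_right sum_distrib_left algebra_simps)
    qed
    have b0: "\<forall>a\<in>{2..CARD('b)^2}. \<beta> a = 0"
    proof
      fix a assume a: "a \<in> {2..CARD('b)^2}"
      have trt: "(\<Sum>i\<in>UNIV. \<tau> b $ i $ i) = 0" if "b \<in> {2..CARD('a)^2}" for b
        using tau_basis that unfolding traceless_herm_basis_def qtrace_def by blast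
      have "(\<Sum>i\<in>UNIV. \<beta> a * (if i = i then 1 else 0) + (\<Sum>b=2..CARD('a)^2. \<gamma> a b * \<tau> b $ i $ i)) = 0"
      proof (intro sum.neutral ballI)
        fix i :: 'a
        show "\<beta> a * (if i = i then 1 else 0) + (\<Sum>b=2..CARD('a)^2. \<gamma> a b * \<tau> b $ i $ i) = 0"
          using Y0[of i i] a by blast
      qed
      moreover have "(\<Sum>i\<in>UNIV. \<beta> a * (if i = i then 1 else 0) + (\<Sum>b=2..CARD('a)^2. \<gamma> a b * \<tau> b $ i $ i))
          = \<beta> a * of_nat CARD('a) + (\<Sum>b=2..CARD('a)^2. \<gamma> a b * (\<Sum>i\<in>UNIV. \<tau> b $ i $ i))"
        by (simp add: sum.distrib sum_distrib_left) (subst sum.swap, simp)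
      moreover have "(\<Sum>b=2..CARD('a)^2. \<gamma> a b * (\<Sum>i\<in>UNIV. \<tau> b $ i $ i)) = 0"
        using trt by simp
      ultimately show "\<beta> a = 0" by simp
    qed
    have g0: "\<forall>a\<in>{2..CARD('b)^2}. \<forall>b\<in>{2..CARD('a)^2}. \<gamma> a b = 0"
    proof
      fix a assume a: "a \<in> {2..CARD('b)^2}"
      show "\<forall>b\<in>{2..CARD('a)^2}. \<gamma> a b = 0"
      proof (rule basis_indep_complex[OF tau_basis])
        fix p q show "(\<Sum>b=2..CARD('a)^2. \<gamma> a b * \<tau> b $ p $ q) = 0"
          using Y0[of p q] b0 a by auto
      qed
    qed
    show "(\<forall>m<r. \<forall>n<r. \<alpha> m n = 0) \<and> (\<forall>a\<in>{2..CARD('b)^2}. \<beta> a = 0)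
              \<and> (\<forall>a\<in>{2..CARD('b)^2}. \<forall>b\<in>{2..CARD('a)^2}. \<gamma> a b = 0)"
      using a0 b0 g0 by blast
  qed
next
  assume P2: ?P2
  show ?P1
  proof (rule allI, rule impI)
    fix \<alpha> :: "nat \<Rightarrow> nat \<Rightarrow> complex"
    assume eq1: "(\<Sum>m<r. \<Sum>n<r. cscale (\<alpha> m n) (qadj (K m) ** K n)) = 0"
    define S where "S = {2..CARD('b)^2}"
    define T where "T = {2..CARD('a)^2}"
    define x where "x k i l j = (\<Sum>m<r. \<Sum>n<r. \<alpha> n m * (K m $ k $ i * cnj (K n $ l $ j)))" for k i l j
    have trx: "(\<Sum>k\<in>UNIV. x k i k j) = 0" for i j
    proof -
      have "(\<Sum>m<r. \<Sum>n<r. cscale (\<alpha> m n) (qadj (K m) ** K n)) $ j $ i = 0" using eq1 by simp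
      then show ?thesis
        using prod_entry[where \<alpha>=\<alpha> and r=r and K=K and i=j and j=i]
          swap_id[where r=r and \<alpha>="\<lambda>m n. \<alpha> n m" and K=K and i=j and j=i]
        unfolding x_def by simp
    qed
    define PC where "PC i j c = (\<forall>k l. x k i l j = (\<Sum>a\<in>S. c a * \<sigma> a $ k $ l))" for i j c
    have exC: "\<exists>c. PC i j c" for i j
    proof -
      have "qtrace ((\<chi> k l. x k i l j) :: complex^'b^'b) = 0" using trx[of i j] by (simp add: qtrace_def)
      from basis_span_complex[OF sigma_basis this] show ?thesis unfolding PC_def S_def by simp
    qed
    define C where "C i j = (SOME c. PC i j c)" for i j
    have C: "x k i l j = (\<Sum>a\<in>S. C i j a * \<sigma> a $ k $ l)" for k i l j
      using someI_ex[OF exC[of i j]] unfolding C_def PC_def by blast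
    define PD where "PD i j de = (\<forall>p q. (if p = i \<and> q = j then 1 else 0) = fst de * (if p = q then 1 else 0) + (\<Sum>b\<in>T. snd de b * \<tau> b $ p $ q))" for i j and de :: "complex \<times> (nat \<Rightarrow> complex)"
    have exD: "\<exists>de. PD i j de" for i j
    proof -
      obtain d e where "\<forall>p q. ((\<chi> p q. if p = i \<and> q = j then 1 else 0) :: complex^'a^'a) $ p $ q = d * (if p = q then 1 else 0) + (\<Sum>b=2..CARD('a)^2. e b * \<tau> b $ p $ q)"
        using basis_span_all[OF tau_basis] by blast
      then have "PD i j (d, e)" unfolding PD_def T_def by simp
      then show ?thesis by blast
    qed
    define D where "D i j = (SOME de. PD i j de)" for i j
    have D: "(if p = i \<and> q = j then 1 else 0) = fst (D i j) * (if p = q then 1 else 0) + (\<Sum>b\<in>T. snd (D i j) b * \<tau> b $ p $ q)" for i j p q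
      using someI_ex[OF exD[of i j]] unfolding D_def PD_def by blast
    define \<beta> where "\<beta> a = - (\<Sum>i\<in>UNIV. \<Sum>j\<in>UNIV. C i j a * fst (D i j))" for a
    define \<gamma> where "\<gamma> a b = - (\<Sum>i\<in>UNIV. \<Sum>j\<in>UNIV. C i j a * snd (D i j) b)" for a b
    have key: "(\<Sum>a\<in>S. \<beta> a * (\<sigma> a $ k $ l * (if i = j then 1 else 0)))
     + (\<Sum>a\<in>S. \<Sum>b\<in>T. \<gamma> a b * (\<sigma> a $ k $ l * \<tau> b $ i $ j))
     = - (\<Sum>a\<in>S. C i j a * \<sigma> a $ k $ l)" for k i l j
    proof -
      have inner: "(\<Sum>i'\<in>UNIV. \<Sum>j'\<in>UNIV. C i' j' a * fst (D i' j')) * (if i = j then 1 else 0)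
          + (\<Sum>b\<in>T. (\<Sum>i'\<in>UNIV. \<Sum>j'\<in>UNIV. C i' j' a * snd (D i' j') b) * \<tau> b $ i $ j) = C i j a" for a
      proof -
        have "(\<Sum>i'\<in>UNIV. \<Sum>j'\<in>UNIV. C i' j' a * fst (D i' j')) * (if i = j then 1 else 0)
          + (\<Sum>b\<in>T. (\<Sum>i'\<in>UNIV. \<Sum>j'\<in>UNIV. C i' j' a * snd (D i' j') b) * \<tau> b $ i $ j)
          = (\<Sum>i'\<in>UNIV. \<Sum>j'\<in>UNIV. C i' j' a * fst (D i' j')) * (if i = j then 1 else 0)
          + (\<Sum>i'\<in>UNIV. \<Sum>j'\<in>UNIV. \<Sum>b\<in>T. C i' j' a * (snd (D i' j') b * \<tau> b $ i $ j))"
          by (simp add: sum_distrib_right sum.swap[of _ T] mult.assoc)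
        also have "\<dots> = (\<Sum>i'\<in>UNIV. \<Sum>j'\<in>UNIV. C i' j' a * (fst (D i' j') * (if i = j then 1 else 0)
              + (\<Sum>b\<in>T. snd (D i' j') b * \<tau> b $ i $ j)))"
          by (simp add: sum_distrib_right sum_distrib_left sum.distrib algebra_simps)
        also have "\<dots> = (\<Sum>i'\<in>UNIV. \<Sum>j'\<in>UNIV. C i' j' a * (if i = i' \<and> j = j' then 1 else 0))"
          using D by simp
        also have "\<dots> = (\<Sum>i'\<in>UNIV. if i = i' then (\<Sum>j'\<in>UNIV. if j = j' then C i' j' a else 0) else 0)"
          by (rule sum.cong[OF refl]) (auto simp: mult_if_delta)
        also have "\<dots> = C i j a"
          by (simp only: sum.delta' finite UNIV_I if_True)
        finally show ?thesis .
      qed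
      have "(\<Sum>a\<in>S. \<beta> a * (\<sigma> a $ k $ l * (if i = j then 1 else 0)))
       + (\<Sum>a\<in>S. \<Sum>b\<in>T. \<gamma> a b * (\<sigma> a $ k $ l * \<tau> b $ i $ j))
       = - (\<Sum>a\<in>S. \<sigma> a $ k $ l * ((\<Sum>i'\<in>UNIV. \<Sum>j'\<in>UNIV. C i' j' a * fst (D i' j')) * (if i = j then 1 else 0)
          + (\<Sum>b\<in>T. (\<Sum>i'\<in>UNIV. \<Sum>j'\<in>UNIV. C i' j' a * snd (D i' j') b) * \<tau> b $ i $ j)))"
        unfolding \<beta>_def \<gamma>_def
        by (simp add: sum_distrib_left sum.distrib sum_negf algebra_simps)
      also have "\<dots> = - (\<Sum>a\<in>S. C i j a * \<sigma> a $ k $ l)"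
        using inner by (simp add: mult.commute)
      finally show ?thesis .
    qed
    have "(\<Sum>m<r. \<Sum>n<r. cscale (\<alpha> n m) (ketbra (dket (K m)) (dket (K n))))
            + (\<Sum>a=2..CARD('b)^2. cscale (\<beta> a) (qtensor (\<sigma> a) (mat 1)))
            + (\<Sum>a=2..CARD('b)^2. \<Sum>b=2..CARD('a)^2. cscale (\<gamma> a b) (qtensor (\<sigma> a) (\<tau> b))) = 0"
    proof (subst vec_eq_iff, intro allI)
      fix p1 p2 :: "'b \<times> 'a"
      obtain k i where p1: "p1 = (k, i)" by (cases p1)
      obtain l j where p2: "p2 = (l, j)" by (cases p2)
      show "((\<Sum>m<r. \<Sum>n<r. cscale (\<alpha> n m) (ketbra (dket (K m)) (dket (K n))))
            + (\<Sum>a=2..CARD('b)^2. cscale (\<beta> a) (qtensor (\<sigma> a) (mat 1)))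
            + (\<Sum>a=2..CARD('b)^2. \<Sum>b=2..CARD('a)^2. cscale (\<gamma> a b) (qtensor (\<sigma> a) (\<tau> b)))) $ p1 = 0 $ p1"
      proof (subst vec_eq_iff, intro allI)
        fix p2 :: "'b \<times> 'a"
        obtain l j where p2: "p2 = (l, j)" by (cases p2)
        have e1: "(\<Sum>m<r. \<Sum>n<r. \<alpha> n m * (K m $ k $ i * cnj (K n $ l $ j))) = (\<Sum>a=2..CARD('b)^2. C i j a * \<sigma> a $ k $ l)"
          using C[of k i l j] unfolding x_def S_def .
        have e2: "(\<Sum>a=2..CARD('b)^2. \<beta> a * (\<sigma> a $ k $ l * (if i = j then 1 else 0)))
     + (\<Sum>a=2..CARD('b)^2. \<Sum>b=2..CARD('a)^2. \<gamma> a b * (\<sigma> a $ k $ l * \<tau> b $ i $ j))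
     = - (\<Sum>a=2..CARD('b)^2. C i j a * \<sigma> a $ k $ l)"
          using key[of k l i j] unfolding S_def T_def .
        show "((\<Sum>m<r. \<Sum>n<r. cscale (\<alpha> n m) (ketbra (dket (K m)) (dket (K n))))
            + (\<Sum>a=2..CARD('b)^2. cscale (\<beta> a) (qtensor (\<sigma> a) (mat 1)))
            + (\<Sum>a=2..CARD('b)^2. \<Sum>b=2..CARD('a)^2. cscale (\<gamma> a b) (qtensor (\<sigma> a) (\<tau> b)))) $ p1 $ p2 = 0 $ p1 $ p2"
          unfolding p1 p2 big_entry unfolding zero_index add.assoc e1 e2 by simp
      qed
    qed
    from P2[rule_format, OF this] have "\<forall>m<r. \<forall>n<r. \<alpha> n m = 0" by (rule conjunct1)
    then show "\<forall>m<r. \<forall>n<r. \<alpha> m n = 0" by blast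
  qed
qed

end
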